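(* Let $d\ge1$, $\lambda,R,B>0$, let $(x_s,y_s)_{s\ge1}$ satisfy $\|x_s\|\le R$, $y_s\in\{-1,1\}$, let $t\ge1$, and let $\Omega_t$ and its minimizer $\omega_t\in\mathbb R^{p_t}$ be as defined in the context. Let $\epsilon,\gamma>0$, $T\in\mathbb N$, and define $\omega_t^0=0$ and $\omega_t^i=\omega_t^{i-1}-\gamma\nabla\Omega_t(\omega_t^{i-1})$ for $i=1,\dots,T$. If \[\gamma=\frac{\lambda}{4\lambda+R^2},\qquad T\ge\left(4+\frac{R^2}{\lambda}\right)\log\frac{Rt}{\epsilon\sqrt\lambda},\] then $\|\omega_t^T-\omega_t\|\le\epsilon$.
   Context: Logistic loss $\ell(z,y)=\log(1+e^{-yz})$, $\ell_s(\theta)=\ell(\theta^\top x_s,y_s)$. Let $\hat\theta_s$ be the AIOLI forecasts: for $s<t$, $g_s=\nabla\ell_s(\hat\theta_s)$, $\eta_s=e^{y_s\hat\theta_s^\top x_s}/(1+BR)$, $\hat\ell_s(\theta)=\ell_s(\hat\theta_s)+g_s^\top(\theta-\hat\theta_s)+\frac{\eta_s}{2}(\theta-\hat\theta_s)^\top g_sg_s^\top(\theta-\hat\theta_s)$, and $\hat\theta_t=\arg\min_\theta\{\sum_{s<t}\hat\ell_s(\theta)+\ell(\theta^\top x_t,1)+\ell(\theta^\top x_t,-1)+\lambda\|\theta\|^2\}$. Let $A_{t-1}=\lambda I+\frac12\sum_{s=1}^{t-1}\eta_sg_sg_s^\top$, $b_{t-1}=\frac12\sum_{s=1}^{t-1}(\eta_sg_s^\top\hat\theta_s-1)g_s$,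 $L_{t-1}$ the lower-triangular Cholesky factor of $A_{t-1}$, $W_t=L_{t-1}^{-1}(b_{t-1},x_t)\in\mathbb R^{d\times2}$ of rank $p_t\in\{1,2\}$, $W_t^\top W_t=U_t\Sigma_tU_t^\top$ its economic eigendecomposition ($U_t\in\mathbb R^{2\times p_t}$ with orthonormal columns, $\Sigma_t$ positive diagonal), $u_t=\Sigma_t^{1/2}U_t^\top e_1$, $v_t=\Sigma_t^{1/2}U_t^\top e_2$ with $e_1=(1,0),e_2=(0,1)$, and \[\Omega_t(\omega)=\|\omega\|^2-2u_t^\top\omega+\log(1+e^{-v_t^\top\omega})+\log(1+e^{v_t^\top\omega}),\quad\omega\in\mathbb R^{p_t},\] with unique minimizer $\omega_t$. *)

theory Defs
  imports "HOL-Analysis.Analysis"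
begin

definition grad :: "('a::real_inner \<Rightarrow> real) \<Rightarrow> 'a \<Rightarrow> 'a" where
  "grad f x = (THE D. GDERIV f x :> D)"

definition argmin :: "('a \<Rightarrow> real) \<Rightarrow> 'a" where
  "argmin f = (THE z. \<forall>w. f z \<le> f w)"

definition logloss :: "real \<Rightarrow> real \<Rightarrow> real" where
  "logloss z y = ln (1 + exp (- y * z))"

definition outer :: "real^'n \<Rightarrow> real^'n \<Rightarrow> real^'n^'n" where
  "outer g h = (\<chi> i j. g $ i * h $ j)"

definition aioli_g :: "(nat \<Rightarrow> real^'n) \<Rightarrow> (nat \<Rightarrow> real) \<Rightarrow> (nat \<Rightarrow> real^'n) \<Rightarrow> nat \<Rightarrow> real^'n" where
  "aioli_g x y th s = grad (\<lambda>\<theta>. logloss (\<theta> \<bullet> x s) (y s)) (th s)"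

definition aioli_eta :: "real \<Rightarrow> real \<Rightarrow> (nat \<Rightarrow> real^'n) \<Rightarrow> (nat \<Rightarrow> real) \<Rightarrow> (nat \<Rightarrow> real^'n) \<Rightarrow> nat \<Rightarrow> real" where
  "aioli_eta B R x y th s = exp (y s * (th s \<bullet> x s)) / (1 + B * R)"

definition aioli_surr :: "real \<Rightarrow> real \<Rightarrow> (nat \<Rightarrow> real^'n) \<Rightarrow> (nat \<Rightarrow> real) \<Rightarrow> (nat \<Rightarrow> real^'n) \<Rightarrow> nat \<Rightarrow> real^'n \<Rightarrow> real" where
  "aioli_surr B R x y th s \<theta> =
     logloss (th s \<bullet> x s) (y s) + aioli_g x y th s \<bullet> (\<theta> - th s)
     + aioli_eta B R x y th s / 2 * ((\<theta> - th s) \<bullet> aioli_g x y th s)^2"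

definition is_aioli_forecasts :: "real \<Rightarrow> real \<Rightarrow> real \<Rightarrow> (nat \<Rightarrow> real^'n) \<Rightarrow> (nat \<Rightarrow> real) \<Rightarrow> (nat \<Rightarrow> real^'n) \<Rightarrow> bool" where
  "is_aioli_forecasts lam B R x y th \<longleftrightarrow>
     (\<forall>t\<ge>1. th t = argmin (\<lambda>\<theta>. (\<Sum>s\<in>{1..<t}. aioli_surr B R x y th s \<theta>)
                               + logloss (\<theta> \<bullet> x t) 1 + logloss (\<theta> \<bullet> x t) (-1)
                               + lam * (norm \<theta>)^2))"

definition aioli_A :: "real \<Rightarrow> real \<Rightarrow> real \<Rightarrow> (nat \<Rightarrow> real^'n) \<Rightarrow> (nat \<Rightarrow> real) \<Rightarrow> (nat \<Rightarrow> real^'n) \<Rightarrow> nat \<Rightarrow> real^'n^'n" where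
  "aioli_A lam B R x y th t = lam *\<^sub>R mat 1
     + (1/2) *\<^sub>R (\<Sum>s\<in>{1..<t}. aioli_eta B R x y th s *\<^sub>R outer (aioli_g x y th s) (aioli_g x y th s))"

definition aioli_b :: "real \<Rightarrow> real \<Rightarrow> (nat \<Rightarrow> real^'n) \<Rightarrow> (nat \<Rightarrow> real) \<Rightarrow> (nat \<Rightarrow> real^'n) \<Rightarrow> nat \<Rightarrow> real^'n" where
  "aioli_b B R x y th t = (1/2) *\<^sub>R
     (\<Sum>s\<in>{1..<t}. (aioli_eta B R x y th s * (aioli_g x y th s \<bullet> th s) - 1) *\<^sub>R aioli_g x y th s)"

definition lower_triangular :: "real^('n::{finite,wellorder})^('n::{finite,wellorder}) \<Rightarrow> bool" where
  "lower_triangular L \<longleftrightarrow> (\<forall>i j. i < j \<longrightarrow> L $ i $ j = 0)"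

definition cholesky :: "real^('n::{finite,wellorder})^('n::{finite,wellorder}) \<Rightarrow> real^('n::{finite,wellorder})^('n::{finite,wellorder})" where
  "cholesky A = (THE L. lower_triangular L \<and> (\<forall>i. L $ i $ i > 0) \<and> L ** transpose L = A)"

(* W_t = L_{t-1}^{-1} (b_{t-1}, x_t) *)
definition aioli_W :: "real \<Rightarrow> real \<Rightarrow> real \<Rightarrow> (nat \<Rightarrow> real^('n::{finite,wellorder})) \<Rightarrow> (nat \<Rightarrow> real) \<Rightarrow> (nat \<Rightarrow> real^('n::{finite,wellorder})) \<Rightarrow> nat \<Rightarrow> real^2^('n::{finite,wellorder})" where
  "aioli_W lam B R x y th t =
     (let Li = matrix_inv (cholesky (aioli_A lam B R x y th t));
          c1 = Li *v aioli_b B R x y th t; c2 = Li *v x t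
      in \<chi> i. vector [c1 $ i, c2 $ i])"

definition diag_mat :: "real^'p \<Rightarrow> real^'p^'p" where
  "diag_mat s = (\<chi> i j. if i = j then s $ i else 0)"

(* economic eigendecomposition W^T W = U Sigma U^T, U : 2 x p with orthonormal columns,
   Sigma = diag sig positive; p = CARD('p) = rank W *)
definition is_econ_eig :: "real^2^2 \<Rightarrow> real^'p^2 \<Rightarrow> real^'p \<Rightarrow> bool" where
  "is_econ_eig M U sig \<longleftrightarrow> CARD('p) = rank M \<and> transpose U ** U = mat 1 \<and> (\<forall>i. sig $ i > 0)
      \<and> M = U ** diag_mat sig ** transpose U"

definition eig_u :: "real^'p^2 \<Rightarrow> real^'p \<Rightarrow> real^'p" where
  "eig_u U sig = (\<chi> i. sqrt (sig $ i) * U $ 1 $ i)"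

definition eig_v :: "real^'p^2 \<Rightarrow> real^'p \<Rightarrow> real^'p" where
  "eig_v U sig = (\<chi> i. sqrt (sig $ i) * U $ 2 $ i)"

definition Omega :: "real^'p \<Rightarrow> real^'p \<Rightarrow> real^'p \<Rightarrow> real" where
  "Omega u v \<omega> = (norm \<omega>)^2 - 2 * (u \<bullet> \<omega>) + ln (1 + exp (- (v \<bullet> \<omega>))) + ln (1 + exp (v \<bullet> \<omega>))"

definition gd_iter :: "('a::real_inner \<Rightarrow> real) \<Rightarrow> real \<Rightarrow> nat \<Rightarrow> 'a" where
  "gd_iter f \<gamma> T = ((\<lambda>w. w - \<gamma> *\<^sub>R grad f w) ^^ T) 0"

end

theory Submission
  imports Defs
begin


lemma outer_nth[simp]: "outer g h $ i $ j = g $ i * h $ j"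
  by (simp add: outer_def)

lemma if01_mult[simp]: "(if c then 1 else 0) * (x::real) = (if c then x else 0)"
  "x * (if c then 1 else 0) = (if c then x else 0)" by auto

lemma axis_inner_Av: "axis m 1 \<bullet> (A *v z) = (\<Sum>j\<in>UNIV. A$m$j * z$j)"
  by (simp add: inner_vec_def matrix_vector_mult_def axis_def)

lemma inner_Av_axis: "(z::real^'n) \<bullet> (A *v axis m 1) = (\<Sum>i\<in>UNIV. z$i * A$i$m)"
  by (simp add: inner_vec_def matrix_vector_mult_def axis_def)

lemma outer_mult: "outer g h *v (z::real^'n) = (h \<bullet> z) *\<^sub>R g"
  by (simp add: vec_eq_iff matrix_vector_mult_def outer_def inner_vec_def sum_distrib_left mult_ac)

lemma chol_ex_S:
  fixes A :: "real^('n::{finite,wellorder})^('n::{finite,wellorder})"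
  shows "(\<forall>i j. (i \<notin> S \<or> j \<notin> S) \<longrightarrow> A$i$j = 0) \<Longrightarrow> (\<forall>i j. A$i$j = A$j$i)
    \<Longrightarrow> (\<forall>z. z \<noteq> 0 \<and> (\<forall>i. i \<notin> S \<longrightarrow> z$i = 0) \<longrightarrow> z \<bullet> (A *v z) > 0)
    \<Longrightarrow> \<exists>L. lower_triangular L \<and> (\<forall>i\<in>S. L$i$i > 0) \<and> (\<forall>i j. (i \<notin> S \<or> j \<notin> S) \<longrightarrow> L$i$j = 0)
        \<and> L ** transpose L = A"
proof (induction "card S" arbitrary: S A rule: less_induct)
  case less
  show ?case
  proof (cases "S = {}")
    case True
    then have "A = 0" using less.prems(1) by (simp add: vec_eq_iff)
    then show ?thesis using True
      by (intro exI[of _ 0]) (auto simp: lower_triangular_def)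
  next
    case False
    have fin: "finite S" by simp
    define m where "m = Min S"
    have mS: "m \<in> S" using False fin m_def by simp
    have mmin: "\<And>i. i \<in> S \<Longrightarrow> m \<le> i" using fin m_def by simp
    define a where "a = A$m$m"
    have "axis m (1::real) \<bullet> (A *v axis m 1) > 0"
      using less.prems(3) mS by (auto simp: axis_def vec_eq_iff)
    then have apos: "a > 0"
      by (simp add: a_def inner_vec_def matrix_vector_mult_def axis_def)
    define l where "l = (\<chi> i. A$i$m / sqrt a)"
    define A' where "A' = A - outer l l"
    define S' where "S' = S - {m}"
    have A'nth: "A'$i$j = A$i$j - A$i$m * A$m$j / a" for i j
      using apos less.prems(2)
      by (simp add: A'_def l_def real_sqrt_mult[symmetric] power2_eq_square[symmetric])
    have card: "card S' < card S" unfolding S'_def by (rule card_Diff1_less[OF fin mS])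
    have p1: "\<forall>i j. (i \<notin> S' \<or> j \<notin> S') \<longrightarrow> A'$i$j = 0"
    proof (intro allI impI)
      fix i j assume "i \<notin> S' \<or> j \<notin> S'"
      then consider "i \<notin> S" | "j \<notin> S" | "i = m" | "j = m" unfolding S'_def by blast
      then show "A'$i$j = 0"
        by cases (use less.prems(1,2) apos in \<open>auto simp: A'nth a_def\<close>)
    qed
    have p2: "\<forall>i j. A'$i$j = A'$j$i" using less.prems(2) by (simp add: A'nth)
    have p3: "\<forall>z. z \<noteq> 0 \<and> (\<forall>i. i \<notin> S' \<longrightarrow> z$i = 0) \<longrightarrow> z \<bullet> (A' *v z) > 0"
    proof (intro allI impI)
      fix z :: "real^('n::{finite,wellorder})" assume z: "z \<noteq> 0 \<and> (\<forall>i. i \<notin> S' \<longrightarrow> z$i = 0)"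
      define p where "p = (\<Sum>j\<in>UNIV. A$m$j * z$j)"
      define w where "w = z - (p / a) *\<^sub>R axis m 1"
      have zm: "z$m = 0" using z S'_def by auto
      have "w \<noteq> 0"
      proof
        assume "w = 0"
        then have "\<forall>i. i \<noteq> m \<longrightarrow> z$i = 0" by (auto simp: w_def vec_eq_iff axis_def)
        then have "z = 0" using zm by (auto simp: vec_eq_iff)
        then show False using z by simp
      qed
      moreover have "\<forall>i. i \<notin> S \<longrightarrow> w$i = 0" using z mS by (auto simp: w_def S'_def axis_def)
      ultimately have wpos: "w \<bullet> (A *v w) > 0" using less.prems(3) by blast
      have q1: "axis m 1 \<bullet> (A *v z) = p" by (simp add: axis_inner_Av p_def)
      have q2: "z \<bullet> (A *v axis m 1) = p" unfolding inner_Av_axis p_def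
        using less.prems(2) by (simp add: mult.commute)
      have q3: "axis m 1 \<bullet> (A *v axis m 1) = a" unfolding axis_inner_Av a_def by (simp add: axis_def)
      have e1: "w \<bullet> (A *v w) = z \<bullet> (A *v z) - p^2 / a"
        unfolding w_def using apos
        by (simp add: matrix_vector_mult_diff_distrib matrix_vector_mult_scaleR inner_diff_left
            inner_diff_right q1 q2 q3 power2_eq_square field_simps)
      have lz: "l \<bullet> z = p / sqrt a"
        unfolding l_def p_def inner_vec_def using less.prems(2)
        by (simp add: sum_divide_distrib mult.commute)
      have e2: "z \<bullet> (A' *v z) = z \<bullet> (A *v z) - p^2 / a"
        unfolding A'_def using apos
        by (simp add: matrix_vector_mult_diff_rdistrib outer_mult inner_diff_right lz
            inner_commute[of z l] power_divide power2_eq_square)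
      show "z \<bullet> (A' *v z) > 0" using e1 e2 wpos by simp
    qed
    obtain L' where L': "lower_triangular L'" "\<forall>i\<in>S'. L'$i$i > 0"
      "\<forall>i j. (i \<notin> S' \<or> j \<notin> S') \<longrightarrow> L'$i$j = 0" "L' ** transpose L' = A'"
      using less.hyps[OF card p1 p2 p3] by blast
    define L where "L = L' + outer l (axis m 1)"
    have lS: "i \<notin> S \<Longrightarrow> l$i = 0" for i using less.prems(1) by (simp add: l_def)
    have Lnth: "L$i$j = L'$i$j + (if j = m then l$i else 0)" for i j
      by (simp add: L_def axis_def)
    have L'm: "L'$i$m = 0" "L'$m$i = 0" for i using L'(3) S'_def by auto
    have "lower_triangular L"
      unfolding lower_triangular_def
    proof (intro allI impI)
      fix i j :: 'n assume ij: "i < j"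
      have "i \<notin> S" if "j = m" using mmin ij that by force
      then show "L$i$j = 0" using L'(1) ij lS unfolding lower_triangular_def by (auto simp: Lnth)
    qed
    moreover have "\<forall>i\<in>S. L$i$i > 0"
    proof
      fix i assume iS: "i \<in> S"
      show "L$i$i > 0"
      proof (cases "i = m")
        case True
        have "l$m = sqrt a" using apos by (simp add: l_def a_def[symmetric] real_div_sqrt)
        then show ?thesis using True L'm apos by (simp add: Lnth)
      next
        case False
        then show ?thesis using L'(2) iS S'_def by (simp add: Lnth)
      qed
    qed
    moreover have "\<forall>i j. (i \<notin> S \<or> j \<notin> S) \<longrightarrow> L$i$j = 0"
      using L'(3) lS mS S'_def by (auto simp: Lnth)
    moreover have "L ** transpose L = A"
    proof -
      have "(L ** transpose L)$i$j = A$i$j" for i j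
      proof -
        have "(L ** transpose L)$i$j = (\<Sum>k\<in>UNIV. L$i$k * L$j$k)"
          by (simp add: matrix_matrix_mult_def transpose_def)
        also have "\<dots> = (\<Sum>k\<in>UNIV. L'$i$k * L'$j$k + (if k = m then l$i * l$j else 0))"
          by (rule sum.cong) (auto simp: Lnth L'm)
        also have "\<dots> = (L' ** transpose L')$i$j + l$i * l$j"
          by (simp add: sum.distrib matrix_matrix_mult_def transpose_def)
        also have "\<dots> = A$i$j" using L'(4) by (simp add: A'_def)
        finally show ?thesis .
      qed
      then show ?thesis by (simp add: vec_eq_iff)
    qed
    ultimately show ?thesis by blast
  qed
qed

lemma chol_col_min:
  fixes L :: "real^('n::{finite,wellorder})^('n::{finite,wellorder})"
  assumes "lower_triangular L" "\<forall>i j. (i \<notin> S \<or> j \<notin> S) \<longrightarrow> L$i$j = 0"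
    "m \<in> S" "\<And>k. k \<in> S \<Longrightarrow> m \<le> k"
  shows "(L ** transpose L)$i$m = L$i$m * L$m$m"
proof -
  have "(L ** transpose L)$i$m = (\<Sum>k\<in>UNIV. L$i$k * L$m$k)"
    by (simp add: matrix_matrix_mult_def transpose_def)
  also have "\<dots> = (\<Sum>k\<in>UNIV. if k = m then L$i$m * L$m$m else 0)"
  proof (rule sum.cong)
    fix k :: 'n
    have "L$m$k = 0" if "k \<noteq> m"
    proof (cases "m < k")
      case True then show ?thesis using assms(1) by (simp add: lower_triangular_def)
    next
      case False
      then have "k < m" using that by simp
      then have "k \<notin> S" using assms(4) by force
      then show ?thesis using assms(2) by blast
    qed
    then show "L$i$k * L$m$k = (if k = m then L$i$m * L$m$m else 0)" by auto
  qed simp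
  also have "\<dots> = L$i$m * L$m$m" by simp
  finally show ?thesis .
qed

lemma chol_uniq_S:
  fixes L1 L2 :: "real^('n::{finite,wellorder})^('n::{finite,wellorder})"
  shows "lower_triangular L1 \<Longrightarrow> lower_triangular L2 \<Longrightarrow> \<forall>i\<in>S. L1$i$i > 0 \<Longrightarrow> \<forall>i\<in>S. L2$i$i > 0
    \<Longrightarrow> \<forall>i j. (i \<notin> S \<or> j \<notin> S) \<longrightarrow> L1$i$j = 0 \<Longrightarrow> \<forall>i j. (i \<notin> S \<or> j \<notin> S) \<longrightarrow> L2$i$j = 0
    \<Longrightarrow> L1 ** transpose L1 = L2 ** transpose L2 \<Longrightarrow> L1 = L2"
proof (induction "card S" arbitrary: S L1 L2 rule: less_induct)
  case less
  show ?case
  proof (cases "S = {}")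
    case True
    then show ?thesis using less.prems(5,6) by (simp add: vec_eq_iff)
  next
    case False
    have fin: "finite S" by simp
    define m where "m = Min S"
    have mS: "m \<in> S" using False fin m_def by simp
    have mmin: "\<And>i. i \<in> S \<Longrightarrow> m \<le> i" using fin m_def by simp
    define S' where "S' = S - {m}"
    have card: "card S' < card S" unfolding S'_def by (rule card_Diff1_less[OF fin mS])
    have c1: "(L1 ** transpose L1)$i$m = L1$i$m * L1$m$m" for i
      by (rule chol_col_min[OF less.prems(1) less.prems(5) mS mmin])
    have c2: "(L2 ** transpose L2)$i$m = L2$i$m * L2$m$m" for i
      by (rule chol_col_min[OF less.prems(2) less.prems(6) mS mmin])
    have p1: "L1$m$m > 0" "L2$m$m > 0" using less.prems(3,4) mS by auto
    have "L1$m$m * L1$m$m = L2$m$m * L2$m$m" using c1[of m] c2[of m] less.prems(7) by simp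
    then have dm: "L1$m$m = L2$m$m" using p1
      by (metis less_eq_real_def mult_less_cancel_left_pos mult_less_cancel_right_pos not_less_iff_gr_or_eq)
    have colm: "L1$i$m = L2$i$m" for i using c1[of i] c2[of i] less.prems(7) dm p1 by simp
    define M1 where "M1 = (\<chi> i j. if j = m then 0 else L1$i$j)"
    define M2 where "M2 = (\<chi> i j. if j = m then 0 else L2$i$j)"
    have lt: "lower_triangular M1" "lower_triangular M2"
      using less.prems(1,2) by (auto simp: lower_triangular_def M1_def M2_def)
    have dg: "\<forall>i\<in>S'. M1$i$i > 0" "\<forall>i\<in>S'. M2$i$i > 0"
      using less.prems(3,4) by (auto simp: S'_def M1_def M2_def)
    have sp: "\<forall>i j. (i \<notin> S' \<or> j \<notin> S') \<longrightarrow> M1$i$j = 0" "\<forall>i j. (i \<notin> S' \<or> j \<notin> S') \<longrightarrow> M2$i$j = 0"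
    proof -
      have r: "L$m$j = 0" if "j \<noteq> m" "lower_triangular L" "\<forall>i j. (i \<notin> S \<or> j \<notin> S) \<longrightarrow> L$i$j = 0"
        for j and L :: "real^('n::{finite,wellorder})^('n::{finite,wellorder})"
      proof (cases "m < j")
        case True then show ?thesis using that(2) by (simp add: lower_triangular_def)
      next
        case False
        then have "j < m" using that by simp
        then have "j \<notin> S" using mmin by force
        then show ?thesis using that(3) by blast
      qed
      show "\<forall>i j. (i \<notin> S' \<or> j \<notin> S') \<longrightarrow> M1$i$j = 0" "\<forall>i j. (i \<notin> S' \<or> j \<notin> S') \<longrightarrow> M2$i$j = 0"
        using less.prems(5,6) r[OF _ less.prems(1,5)] r[OF _ less.prems(2,6)]
        by (auto simp: S'_def M1_def M2_def)
    qed
    have prod: "(M ** transpose M)$i$j = (L ** transpose L)$i$j - L$i$m * L$j$m"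
      if "M = (\<chi> i j. if j = m then 0 else L$i$j)" for M L :: "real^('n::{finite,wellorder})^('n::{finite,wellorder})" and i j
    proof -
      have "(L ** transpose L)$i$j = (\<Sum>k\<in>UNIV. L$i$k * L$j$k)"
        by (simp add: matrix_matrix_mult_def transpose_def)
      also have "\<dots> = (\<Sum>k\<in>UNIV. (if k = m then 0 else L$i$k * L$j$k) + (if k = m then L$i$m * L$j$m else 0))"
        by (rule sum.cong) auto
      also have "\<dots> = (\<Sum>k\<in>UNIV. (if k = m then 0 else L$i$k * L$j$k)) + L$i$m * L$j$m"
        by (simp add: sum.distrib)
      also have "(\<Sum>k\<in>UNIV. (if k = m then 0 else L$i$k * L$j$k)) = (M ** transpose M)$i$j"
        using that by (simp add: matrix_matrix_mult_def transpose_def) (rule sum.cong, auto)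
      finally show ?thesis by simp
    qed
    have "M1 ** transpose M1 = M2 ** transpose M2"
      using prod[OF M1_def] prod[OF M2_def] less.prems(7) colm by (simp add: vec_eq_iff)
    then have "M1 = M2" using less.hyps[OF card lt dg sp] by blast
    then show ?thesis using colm
      by (simp add: vec_eq_iff M1_def M2_def) (metis)
  qed
qed

lemma cholesky_props:
  fixes A :: "real^('n::{finite,wellorder})^('n::{finite,wellorder})"
  assumes sym: "\<forall>i j. A$i$j = A$j$i" and pd: "\<forall>z. z \<noteq> 0 \<longrightarrow> z \<bullet> (A *v z) > 0"
  shows "lower_triangular (cholesky A) \<and> (\<forall>i. cholesky A $i$i > 0) \<and> cholesky A ** transpose (cholesky A) = A"
proof -
  have "\<exists>!L. lower_triangular L \<and> (\<forall>i. L $ i $ i > 0) \<and> L ** transpose L = A"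
  proof -
    obtain L where L: "lower_triangular L" "\<forall>i\<in>UNIV. L$i$i > 0" "L ** transpose L = A"
      using chol_ex_S[of UNIV A] sym pd by auto
    show ?thesis
    proof (rule ex1I[of _ L])
      show "lower_triangular L \<and> (\<forall>i. L $ i $ i > 0) \<and> L ** transpose L = A" using L by auto
    next
      fix L2 assume "lower_triangular L2 \<and> (\<forall>i. L2 $ i $ i > 0) \<and> L2 ** transpose L2 = A"
      then show "L2 = L" using chol_uniq_S[of L2 L UNIV] L by auto
    qed
  qed
  then show ?thesis unfolding cholesky_def by (rule theI')
qed

lemma matrix_inv_right':
  fixes L :: "real^'n^'n"
  assumes "invertible L" shows "L ** matrix_inv L = mat 1"
  using assms unfolding invertible_def matrix_inv_def by (rule someI2_ex) auto

lemma chol_inv_bound: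
  fixes L A :: "real^'n^'n"
  assumes LA: "L ** transpose L = A" and lb: "\<forall>z. z \<bullet> (A *v z) \<ge> lam * (norm z)^2" and lam: "lam > 0"
  shows "(norm (matrix_inv L *v x))^2 \<le> (norm x)^2 / lam"
proof -
  have ker: "\<forall>w. transpose L *v w = 0 \<longrightarrow> w = 0"
  proof (intro allI impI)
    fix w assume "transpose L *v w = 0"
    then have "A *v w = 0" using LA by (metis matrix_vector_mul_assoc matrix_vector_mult_0_right)
    then have "lam * (norm w)^2 \<le> 0" using lb by (metis inner_zero_right)
    then show "w = 0" using lam by (simp add: mult_le_0_iff)
  qed
  then have iT: "invertible (transpose L)"
    using matrix_left_invertible_ker invertible_left_inverse by blast
  then have iL: "invertible L" using transpose_invertible by fastforce
  define w where "w = matrix_inv L *v x"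
  have Lw: "L *v w = x" unfolding w_def
    by (simp add: matrix_vector_mul_assoc matrix_inv_right'[OF iL])
  define z where "z = matrix_inv (transpose L) *v w"
  have Tz: "transpose L *v z = w" unfolding z_def
    by (simp only: matrix_vector_mul_assoc matrix_inv_right'[OF iT] matrix_vector_mul_lid)
  have Az: "A *v z = x" using LA Tz Lw by (metis matrix_vector_mul_assoc)
  have ww: "w \<bullet> w = z \<bullet> x"
  proof -
    have "w \<bullet> w = (transpose L *v z) \<bullet> w" using Tz by simp
    also have "\<dots> = z \<bullet> (L *v w)" by (simp add: dot_lmul_matrix)
    finally show ?thesis using Lw by simp
  qed
  have zx: "lam * (norm z)^2 \<le> z \<bullet> x" using lb Az by metis
  have cs: "z \<bullet> x \<le> norm z * norm x" by (rule norm_cauchy_schwarz)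
  have nw: "(norm w)^2 = z \<bullet> x" using ww by (simp add: power2_norm_eq_inner)
  show ?thesis
  proof (cases "z = 0")
    case True then show ?thesis using ww lam by (simp add: w_def power2_norm_eq_inner)
  next
    case False
    then have nz: "norm z > 0" by simp
    have "(lam * norm z) * norm z \<le> norm x * norm z" using zx cs
      by (simp add: power2_eq_square mult_ac)
    then have l1: "lam * norm z \<le> norm x" using mult_le_cancel_right_pos[OF nz] by blast
    have "lam * (z \<bullet> x) \<le> lam * (norm z * norm x)" using cs lam by simp
    also have "\<dots> = (lam * norm z) * norm x" by simp
    also have "\<dots> \<le> norm x * norm x" using l1 by (simp add: mult_right_mono)
    finally have "lam * (z \<bullet> x) \<le> norm x * norm x" .
    then have "(norm w)^2 * lam \<le> (norm x)^2" using nw by (simp add: power2_eq_square mult.commute)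
    then show ?thesis unfolding w_def[symmetric] using pos_le_divide_eq[OF lam] by blast
  qed
qed



lemma grad_unique:
  fixes f :: "'a::real_inner \<Rightarrow> real"
  assumes "GDERIV f x :> D" shows "grad f x = D"
  unfolding grad_def
proof (rule the_equality)
  show "GDERIV f x :> D" by fact
next
  fix D' assume "GDERIV f x :> D'"
  then have "(\<lambda>h. h \<bullet> D') = (\<lambda>h. h \<bullet> D)" using assms unfolding gderiv_def
    by (rule has_derivative_unique)
  then have "(D' - D) \<bullet> D' = (D' - D) \<bullet> D" by metis
  then have "(D' - D) \<bullet> (D' - D) = 0" by (simp add: inner_diff_right)
  then show "D' = D" by simp
qed

lemma gderiv_inner_left: "GDERIV (\<lambda>\<theta>. \<theta> \<bullet> x) th :> x"
  unfolding gderiv_def by (auto intro!: derivative_eq_intros)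

lemma logloss_deriv:
  fixes y z :: real shows
  "DERIV (\<lambda>z. ln (1 + exp (- y * z))) z :> (- y * exp (- y * z) / (1 + exp (- y * z)))"
proof -
  have d: "((\<lambda>z. 1 + exp (- y * z)) has_real_derivative (exp (- y * z) * (- y))) (at z)"
    by (auto intro!: derivative_eq_intros)
  have "0 < 1 + exp (- y * z)" by (simp add: add_pos_pos)
  from DERIV_chain2[OF DERIV_ln_divide[OF this] d] show ?thesis by (simp add: mult.commute)
qed

lemma aioli_g_formula:
  "aioli_g x y th s = (- y s * exp (- y s * (th s \<bullet> x s)) / (1 + exp (- y s * (th s \<bullet> x s)))) *\<^sub>R x s"
  unfolding aioli_g_def logloss_def
  by (rule grad_unique, rule GDERIV_DERIV_compose[OF gderiv_inner_left logloss_deriv])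

lemma sum_mvmult: "(sum f S) *v z = (\<Sum>s\<in>S. f s *v z)"
  by (induction S rule: infinite_finite_induct) (simp_all add: matrix_vector_mult_add_rdistrib)

lemma eta_pos: "B > 0 \<Longrightarrow> R > 0 \<Longrightarrow> aioli_eta B R x y th s > 0"
  unfolding aioli_eta_def by (simp add: add_pos_pos)

lemma A_sym: "aioli_A lam B R x y th t $ i $ j = aioli_A lam B R x y th t $ j $ i"
  by (simp add: aioli_A_def sum_component mat_def mult.commute)

lemma A_quad:
  assumes "B > 0" "R > 0"
  shows "z \<bullet> (aioli_A lam B R x y th t *v z) \<ge> lam * (norm z)^2"
proof -
  have "z \<bullet> (aioli_A lam B R x y th t *v z) = lam * (z \<bullet> z)
     + (1/2) * (\<Sum>s\<in>{1..<t}. aioli_eta B R x y th s * (aioli_g x y th s \<bullet> z) * (z \<bullet> aioli_g x y th s))"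
    by (simp add: aioli_A_def matrix_vector_mult_add_rdistrib sum_mvmult outer_mult
        flip: scaleR_matrix_vector_assoc add: inner_add_right inner_sum_right mult_ac)
  moreover have "(\<Sum>s\<in>{1..<t}. aioli_eta B R x y th s * (aioli_g x y th s \<bullet> z) * (z \<bullet> aioli_g x y th s)) \<ge> 0"
  proof (intro sum_nonneg)
    fix s
    have "0 \<le> aioli_eta B R x y th s * ((aioli_g x y th s \<bullet> z) * (aioli_g x y th s \<bullet> z))"
      by (rule mult_nonneg_nonneg[OF less_imp_le[OF eta_pos[OF assms]] zero_le_square])
    then show "0 \<le> aioli_eta B R x y th s * (aioli_g x y th s \<bullet> z) * (z \<bullet> aioli_g x y th s)"
      by (simp add: inner_commute[of z] mult.assoc)
  qed
  ultimately show ?thesis by (simp add: power2_norm_eq_inner)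
qed

lemma term_bound_real:
  fixes a c :: real assumes "c \<ge> 1"
  shows "\<bar>a / ((1 + exp (- a)) * c) + 1\<bar> * (exp (- a) / (1 + exp (- a))) \<le> 2"
proof -
  define e where "e = exp (- a)"
  have e0: "e > 0" by (simp add: e_def)
  have key: "\<bar>a\<bar> * e \<le> (1 + e)^2"
  proof (cases "a \<ge> 0")
    case True
    have "a \<le> exp a" using exp_ge_add_one_self[of a] by linarith
    then have "a * e \<le> 1" by (simp add: e_def exp_minus field_simps)
    moreover have "1 \<le> (1 + e)^2" using e0 by (intro one_le_power) simp
    ultimately show ?thesis using True by simp
  next
    case False
    have ae: "- a \<le> e" using exp_ge_add_one_self[of "-a"] by (simp add: e_def)
    have "\<bar>a\<bar> * e \<le> e * e" using False e0 mult_right_mono[OF ae, of e] by simp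
    moreover have "e * e \<le> (1 + e) * (1 + e)" using e0 by (intro mult_mono) auto
    ultimately show ?thesis by (simp add: power2_eq_square)
  qed
  have "\<bar>a / ((1 + e) * c) + 1\<bar> * (e / (1 + e)) \<le> (\<bar>a\<bar> / ((1 + e) * c) + 1) * (e / (1 + e))"
    using e0 assms by (intro mult_right_mono) (auto simp: abs_divide abs_mult intro: order.trans[OF abs_triangle_ineq])
  also have "\<dots> = \<bar>a\<bar> * e / ((1+e)^2 * c) + e / (1 + e)"
  proof -
    have "(1 + e) * c > 0" "1 + e > 0" using e0 assms by auto
    then show ?thesis by (simp add: divide_simps power2_eq_square) (simp add: algebra_simps)
  qed
  also have "\<dots> \<le> 1 + 1"
  proof (rule add_mono)
    have "\<bar>a\<bar> * e / ((1+e)^2 * c) \<le> \<bar>a\<bar> * e / (1+e)^2"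
      using e0 assms by (intro divide_left_mono) (auto simp: mult_pos_pos)
    also have "\<dots> \<le> 1" using key e0 by (simp add: divide_le_eq)
    finally show "\<bar>a\<bar> * e / ((1+e)^2 * c) \<le> 1" .
    show "e / (1 + e) \<le> 1" using e0 by simp
  qed
  finally show ?thesis by (simp add: e_def)
qed

lemma b_term_bound:
  assumes B: "B > 0" and R: "R > 0" and xs: "norm (x s) \<le> R" and ys: "y s \<in> {-1, 1}"
  shows "norm ((aioli_eta B R x y th s * (aioli_g x y th s \<bullet> th s) - 1) *\<^sub>R aioli_g x y th s) \<le> 2 * R"
proof -
  define z where "z = th s \<bullet> x s"
  define a where "a = y s * z"
  define e where "e = exp (- a)"
  define c where "c = 1 + B * R"
  have c1: "c \<ge> 1" using B R by (simp add: c_def)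
  have yy: "y s * y s = 1" "\<bar>y s\<bar> = 1" using ys by auto
  have e0: "e > 0" by (simp add: e_def)
  have ea: "exp a * e = 1" by (simp add: e_def exp_minus)
  have g: "aioli_g x y th s = (- y s * e / (1 + e)) *\<^sub>R x s"
    by (simp add: aioli_g_formula e_def a_def z_def)
  have eta: "aioli_eta B R x y th s = exp a / c"
    by (simp add: aioli_eta_def a_def z_def c_def)
  have gth: "aioli_g x y th s \<bullet> th s = - y s * e / (1 + e) * z"
    by (simp add: g z_def inner_commute)
  have "aioli_eta B R x y th s * (aioli_g x y th s \<bullet> th s) - 1 = - (a / ((1 + e) * c) + 1)"
  proof -
    have "exp a / c * (- y s * e / (1 + e) * z) = - ((exp a * e) * a) / ((1 + e) * c)"
      unfolding a_def by (simp add: field_simps)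
    then show ?thesis by (simp add: eta gth ea)
  qed
  then have "norm ((aioli_eta B R x y th s * (aioli_g x y th s \<bullet> th s) - 1) *\<^sub>R aioli_g x y th s)
      = \<bar>a / ((1 + e) * c) + 1\<bar> * (e / (1 + e)) * norm (x s)"
  proof -
    have "norm (aioli_g x y th s) = e / (1 + e) * norm (x s)"
      using e0 yy by (simp add: g abs_mult abs_divide)
    then show ?thesis by (simp only: \<open>_ = - (a / ((1 + e) * c) + 1)\<close> norm_scaleR abs_minus_cancel mult.assoc)
  qed
  also have "\<dots> \<le> 2 * R"
  proof -
    have "\<bar>a / ((1 + e) * c) + 1\<bar> * (e / (1 + e)) \<le> 2"
      using term_bound_real[OF c1, of a] by (simp add: e_def)
    then show ?thesis using xs by (intro mult_mono) auto
  qed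
  finally show ?thesis .
qed

lemma b_bound:
  assumes B: "B > 0" and R: "R > 0" and xy: "\<forall>s\<ge>1. norm (x s) \<le> R \<and> y s \<in> {-1, 1}"
    and t: "t \<ge> 1"
  shows "norm (aioli_b B R x y th t) \<le> (real t - 1) * R"
proof -
  have "norm (aioli_b B R x y th t) = (1/2) * norm (\<Sum>s\<in>{1..<t}. (aioli_eta B R x y th s * (aioli_g x y th s \<bullet> th s) - 1) *\<^sub>R aioli_g x y th s)"
    by (simp add: aioli_b_def)
  also have "\<dots> \<le> (1/2) * (\<Sum>s\<in>{1..<t}. 2 * R)"
  proof (intro mult_left_mono order.trans[OF norm_sum] sum_mono)
    fix s assume "s \<in> {1..<t}"
    then have "norm (x s) \<le> R \<and> y s \<in> {-1, 1}" using xy by auto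
    then show "norm ((aioli_eta B R x y th s * (aioli_g x y th s \<bullet> th s) - 1) *\<^sub>R aioli_g x y th s) \<le> 2 * R"
      using b_term_bound[OF B R] by blast
  qed simp
  also have "\<dots> = (real t - 1) * R" using t by (simp add: of_nat_diff)
  finally show ?thesis .
qed



definition hfun :: "real \<Rightarrow> real" where "hfun s = (exp s - 1) / (exp s + 1)"
definition fL :: "real \<Rightarrow> real" where "fL z = ln (1 + exp (- z)) + ln (1 + exp z)"

lemma fL_deriv: "DERIV fL z :> hfun z"
proof -
  have d1: "DERIV (\<lambda>z. ln (1 + exp (- 1 * z))) z :> (- 1 * exp (- 1 * z) / (1 + exp (- 1 * z)))"
    by (rule logloss_deriv)
  have d2: "DERIV (\<lambda>z. ln (1 + exp (- (-1) * z))) z :> (- (-1) * exp (- (-1) * z) / (1 + exp (- (-1) * z)))"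
    by (rule logloss_deriv)
  have "DERIV fL z :> (- 1 * exp (- 1 * z) / (1 + exp (- 1 * z))) + (- (-1) * exp (- (-1) * z) / (1 + exp (- (-1) * z)))"
    unfolding fL_def[abs_def] using DERIV_add[OF d1 d2] by simp
  moreover have "(- 1 * exp (- 1 * z) / (1 + exp (- 1 * z))) + (- (-1) * exp (- (-1) * z) / (1 + exp (- (-1) * z))) = hfun z"
  proof -
    have p: "exp z > 0" "1 + exp z > 0" by (auto simp: add_pos_pos)
    have a: "exp (- 1 * z) / (1 + exp (- 1 * z)) = 1 / (exp z + 1)"
      using p by (simp add: exp_minus field_simps)
    have b: "- (-1) * exp (- (-1) * z) / (1 + exp (- (-1) * z)) = exp z / (exp z + 1)" by (simp add: add.commute)
    have "- 1 * exp (- 1 * z) / (1 + exp (- 1 * z)) = - (1 / (exp z + 1))" using a by simp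
    then show ?thesis unfolding b hfun_def by (simp add: diff_divide_distrib)
  qed
  ultimately show ?thesis by simp
qed

lemma hfun_deriv: "DERIV hfun z :> 2 * exp z / (exp z + 1)^2"
proof -
  have p: "exp z + 1 \<noteq> 0" by (smt (verit) exp_gt_zero)
  have "DERIV hfun z :> ((exp z * (exp z + 1) - (exp z - 1) * exp z) / ((exp z + 1) * (exp z + 1)))"
    unfolding hfun_def[abs_def] using p by (auto intro!: derivative_eq_intros)
  moreover have "(exp z * (exp z + 1) - (exp z - 1) * exp z) / ((exp z + 1) * (exp z + 1)) = 2 * exp z / (exp z + 1)^2"
    by (simp add: power2_eq_square algebra_simps)
  ultimately show ?thesis by simp
qed

lemma swap_aux: "(a::real) - b = (c - d) * k \<Longrightarrow> b - a = k * (d - c)"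
  by (simp add: algebra_simps)

lemma hfun_lip: "\<exists>k. 0 \<le> k \<and> k \<le> 1/2 \<and> hfun s - hfun r = k * (s - r)"
proof (cases "r = s")
  case True then show ?thesis by (intro exI[of _ 0]) simp
next
  case False
  have bd: "0 \<le> 2 * exp z / (exp z + 1)^2 \<and> 2 * exp z / (exp z + 1)^2 \<le> 1/2" for z :: real
  proof -
    have "0 \<le> (exp z - 1)^2" by (rule zero_le_power2)
    then have "4 * exp z \<le> (exp z + 1)^2" by (simp add: power2_eq_square algebra_simps)
    moreover have "(exp z + 1)^2 > 0" by (smt (verit) exp_gt_zero zero_less_power)
    ultimately show ?thesis by (simp add: divide_simps)
  qed
  show ?thesis
  proof (cases "r < s")
    case True
    obtain z where "hfun s - hfun r = (s - r) * (2 * exp z / (exp z + 1)^2)"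
      using MVT2[OF True, of hfun "\<lambda>z. 2 * exp z / (exp z + 1)^2"] hfun_deriv by blast
    then show ?thesis using bd[of z] by (intro exI[of _ "2 * exp z / (exp z + 1)^2"]) simp
  next
    case False
    then have sr: "s < r" using \<open>r \<noteq> s\<close> by simp
    obtain z where "hfun r - hfun s = (r - s) * (2 * exp z / (exp z + 1)^2)"
      using MVT2[OF sr, of hfun "\<lambda>z. 2 * exp z / (exp z + 1)^2"] hfun_deriv by blast
    then have "hfun s - hfun r = (2 * exp z / (exp z + 1)^2) * (s - r)" by (rule swap_aux)
    then show ?thesis using bd[of z] by (intro exI[of _ "2 * exp z / (exp z + 1)^2"]) simp
  qed
qed

lemma hfun_mono: "r \<le> s \<Longrightarrow> hfun r \<le> hfun s"
  using hfun_lip[of s r] by (metis diff_ge_0_iff_ge mult_nonneg_nonneg)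

lemma hfun_abs: "\<bar>hfun s\<bar> \<le> 1"
proof -
  have "exp s > 0" by simp
  then have "\<bar>exp s - 1\<bar> \<le> \<bar>exp s + 1\<bar>" by (simp add: abs_le_iff)
  moreover have "0 < exp s + 1" using \<open>exp s > 0\<close> by linarith
  ultimately show ?thesis by (simp add: hfun_def abs_divide divide_le_eq_1)
qed

lemma fL_convex: "fL s \<ge> fL r + hfun r * (s - r)"
proof (cases "r = s")
  case True then show ?thesis by simp
next
  case False
  show ?thesis
  proof (cases "r < s")
    case True
    obtain z where z: "r < z" "z < s" "fL s - fL r = (s - r) * hfun z"
      using MVT2[OF True, of fL hfun] fL_deriv by blast
    have "hfun r * (s - r) \<le> hfun z * (s - r)" using z True hfun_mono[of r z]
      by (intro mult_right_mono) auto
    then show ?thesis using z(3) by (simp only: mult.commute[of "s - r"])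
  next
    case False
    then have sr: "s < r" using \<open>r \<noteq> s\<close> by simp
    obtain z where z: "s < z" "z < r" "fL r - fL s = (r - s) * hfun z"
      using MVT2[OF sr, of fL hfun] fL_deriv by blast
    have "hfun z * (r - s) \<le> hfun r * (r - s)" using z sr hfun_mono[of z r]
      by (intro mult_right_mono) auto
    moreover have "hfun r * (s - r) = - (hfun r * (r - s))" by (simp add: algebra_simps)
    ultimately show ?thesis using z(3) by (simp only: mult.commute[of "r - s"])
  qed
qed



lemma gd_inner_right: "GDERIV (\<lambda>\<omega>. v \<bullet> \<omega>) w :> v"
  unfolding gderiv_def
  by (rule has_derivative_eq_rhs[OF bounded_linear.has_derivative[OF bounded_linear_inner_right has_derivative_ident]])
     (simp add: inner_commute)

lemma gd_sq: "GDERIV (\<lambda>\<omega>. \<omega> \<bullet> \<omega>) w :> 2 *\<^sub>R w"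
  unfolding gderiv_def
  by (rule has_derivative_eq_rhs[OF has_derivative_inner[OF has_derivative_ident has_derivative_ident]])
     (auto simp: inner_commute fun_eq_iff)

lemma Omega_gderiv: "GDERIV (Omega u v) w :> (2 *\<^sub>R w - 2 *\<^sub>R u + hfun (v \<bullet> w) *\<^sub>R v)"
proof -
  have eq: "Omega u v = (\<lambda>\<omega>. (\<omega> \<bullet> \<omega> - 2 * (u \<bullet> \<omega>)) + fL (v \<bullet> \<omega>))"
    by (rule ext) (simp add: Omega_def fL_def power2_norm_eq_inner)
  have d2: "GDERIV (\<lambda>\<omega>. 2 * (u \<bullet> \<omega>)) w :> 2 *\<^sub>R u"
    using GDERIV_mult[OF GDERIV_const[of 2 w] gd_inner_right[of u w]] by simp
  show ?thesis unfolding eq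
    by (rule GDERIV_add[OF GDERIV_diff[OF gd_sq d2] GDERIV_DERIV_compose[OF gd_inner_right fL_deriv]])
qed

lemma Omega_grad: "grad (Omega u v) w = 2 *\<^sub>R w - 2 *\<^sub>R u + hfun (v \<bullet> w) *\<^sub>R v"
  by (rule grad_unique[OF Omega_gderiv])

definition phi :: "real \<Rightarrow> real^'p::finite \<Rightarrow> real^'p \<Rightarrow> real^'p \<Rightarrow> real^'p" where
  "phi \<gamma> u v w = w - \<gamma> *\<^sub>R grad (Omega u v) w"

lemma phi_contr:
  fixes u v :: "real^'p::finite"
  assumes g0: "\<gamma> > 0" and g1: "2 * \<gamma> \<le> 1" and gv: "\<gamma> * (norm v)^2 / 2 \<le> 2 * (1 - 2 * \<gamma>)"
  shows "norm (phi \<gamma> u v a - phi \<gamma> u v b) \<le> (1 - 2 * \<gamma>) * norm (a - b)"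
proof -
  obtain k where k: "0 \<le> k" "k \<le> 1/2" "hfun (v \<bullet> a) - hfun (v \<bullet> b) = k * (v \<bullet> a - v \<bullet> b)"
    using hfun_lip by blast
  define q where "q = 1 - 2 * \<gamma>"
  define c where "c = \<gamma> * k"
  define d where "d = a - b"
  define p where "p = v \<bullet> d"
  have "phi \<gamma> u v a - phi \<gamma> u v b = (1 - 2 * \<gamma>) *\<^sub>R (a - b) - (\<gamma> * (hfun (v \<bullet> a) - hfun (v \<bullet> b))) *\<^sub>R v"
    by (simp add: phi_def Omega_grad algebra_simps)
  also have "\<dots> = q *\<^sub>R d - (c * p) *\<^sub>R v"
    using k(3) by (simp add: q_def c_def d_def p_def inner_diff_right mult_ac)
  finally have X: "phi \<gamma> u v a - phi \<gamma> u v b = q *\<^sub>R d - (c * p) *\<^sub>R v" .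
  have dv: "d \<bullet> v = p" by (simp add: p_def inner_commute)
  have "(norm (phi \<gamma> u v a - phi \<gamma> u v b))^2 = q^2 * (norm d)^2 - 2 * q * c * p^2 + c^2 * p^2 * (norm v)^2"
    unfolding X power2_norm_eq_inner
    by (simp add: inner_diff_left inner_diff_right dv inner_commute[of v d] power2_eq_square algebra_simps)
  also have "\<dots> \<le> q^2 * (norm d)^2"
  proof -
    have c0: "c \<ge> 0" using g0 k by (simp add: c_def)
    have "k * (norm v)^2 \<le> (1/2) * (norm v)^2" using k(2) by (intro mult_right_mono) auto
    then have "\<gamma> * (k * (norm v)^2) \<le> \<gamma> * ((1/2) * (norm v)^2)" using g0 by (intro mult_left_mono) auto
    then have "c * (norm v)^2 \<le> \<gamma> * (norm v)^2 / 2" by (simp add: c_def mult_ac)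
    then have "c * (norm v)^2 - 2 * q \<le> 0" using gv by (simp add: q_def)
    moreover have "c * p^2 \<ge> 0" using c0 by simp
    ultimately have "(c * p^2) * (c * (norm v)^2 - 2 * q) \<le> 0" by (simp add: mult_nonneg_nonpos)
    then show ?thesis by (simp add: algebra_simps power2_eq_square)
  qed
  finally have "(norm (phi \<gamma> u v a - phi \<gamma> u v b))^2 \<le> (q * norm d)^2" by (simp add: power_mult_distrib)
  moreover have "q * norm d \<ge> 0" using g1 by (simp add: q_def)
  ultimately show ?thesis using power2_le_imp_le by (simp add: q_def d_def)
qed

lemma gd_main:
  fixes u v :: "real^'p::finite"
  assumes g0: "\<gamma> > 0" and g1: "2 * \<gamma> \<le> 1" and gv: "\<gamma> * (norm v)^2 / 2 \<le> 2 * (1 - 2 * \<gamma>)"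
  shows "norm (gd_iter (Omega u v) \<gamma> T - argmin (Omega u v)) \<le> (1 - 2 * \<gamma>)^T * (norm u + norm v / 2)"
proof -
  define q where "q = 1 - 2 * \<gamma>"
  have q0: "0 \<le> q" "q < 1" using g0 g1 by (auto simp: q_def)
  have contr: "\<forall>a b. dist (phi \<gamma> u v a) (phi \<gamma> u v b) \<le> q * dist a b"
    using phi_contr[OF g0 g1 gv] by (simp add: dist_norm q_def)
  obtain \<omega> where fx: "phi \<gamma> u v \<omega> = \<omega>" using banach_fix_type[OF q0 contr] by blast
  have "\<gamma> *\<^sub>R grad (Omega u v) \<omega> = 0" using fx by (simp add: phi_def)
  then have "grad (Omega u v) \<omega> = 0" using g0 by simp
  then have st: "hfun (v \<bullet> \<omega>) *\<^sub>R v = 2 *\<^sub>R u - 2 *\<^sub>R \<omega>" by (simp add: Omega_grad algebra_simps)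
  have Om: "Omega u v w = w \<bullet> w - 2 * (u \<bullet> w) + fL (v \<bullet> w)" for w
    by (simp add: Omega_def fL_def power2_norm_eq_inner)
  have key: "Omega u v w \<ge> Omega u v \<omega> + (norm (w - \<omega>))^2" for w
  proof -
    have c: "fL (v \<bullet> w) \<ge> fL (v \<bullet> \<omega>) + hfun (v \<bullet> \<omega>) * (v \<bullet> w - v \<bullet> \<omega>)" by (rule fL_convex)
    have "hfun (v \<bullet> \<omega>) * (v \<bullet> w - v \<bullet> \<omega>) = (hfun (v \<bullet> \<omega>) *\<^sub>R v) \<bullet> (w - \<omega>)"
      by (simp add: inner_diff_right right_diff_distrib)
    also have "\<dots> = 2 * (u \<bullet> w) - 2 * (u \<bullet> \<omega>) - 2 * (\<omega> \<bullet> w) + 2 * (\<omega> \<bullet> \<omega>)"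
      unfolding st by (simp add: inner_diff_left inner_diff_right algebra_simps)
    finally have "fL (v \<bullet> w) \<ge> fL (v \<bullet> \<omega>) + (2 * (u \<bullet> w) - 2 * (u \<bullet> \<omega>) - 2 * (\<omega> \<bullet> w) + 2 * (\<omega> \<bullet> \<omega>))"
      using c by simp
    moreover have "(norm (w - \<omega>))^2 = w \<bullet> w - 2 * (\<omega> \<bullet> w) + \<omega> \<bullet> \<omega>"
      by (simp add: power2_norm_eq_inner inner_diff_left inner_diff_right inner_commute)
    ultimately show ?thesis unfolding Om by linarith
  qed
  have am: "argmin (Omega u v) = \<omega>"
    unfolding argmin_def
  proof (rule the_equality)
    show "\<forall>w. Omega u v \<omega> \<le> Omega u v w"
    proof
      fix w
      have "0 \<le> (norm (w - \<omega>))^2" by (rule zero_le_power2)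
      then show "Omega u v \<omega> \<le> Omega u v w" using key[of w] by linarith
    qed
  next
    fix z assume "\<forall>w. Omega u v z \<le> Omega u v w"
    then have "Omega u v z \<le> Omega u v \<omega>" by blast
    then have "(norm (z - \<omega>))^2 \<le> 0" using key[of z] by linarith
    then show "z = \<omega>" by simp
  qed
  have bd: "norm \<omega> \<le> norm u + norm v / 2"
  proof -
    have "2 *\<^sub>R \<omega> = 2 *\<^sub>R u - hfun (v \<bullet> \<omega>) *\<^sub>R v" using st by (simp add: algebra_simps)
    then have "(1/2) *\<^sub>R (2 *\<^sub>R \<omega>) = (1/2) *\<^sub>R (2 *\<^sub>R u - hfun (v \<bullet> \<omega>) *\<^sub>R v)" by simp
    then have "\<omega> = u - (hfun (v \<bullet> \<omega>) / 2) *\<^sub>R v" by (simp add: scaleR_diff_right)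
    then have "norm \<omega> \<le> norm u + norm ((hfun (v \<bullet> \<omega>) / 2) *\<^sub>R v)" by (metis norm_triangle_ineq4)
    also have "norm ((hfun (v \<bullet> \<omega>) / 2) *\<^sub>R v) \<le> norm v / 2"
      using hfun_abs[of "v \<bullet> \<omega>"] by (simp add: mult_right_le_one_le divide_right_mono mult_left_le_one_le)
    finally show ?thesis by simp
  qed
  have gi: "gd_iter (Omega u v) \<gamma> T = (phi \<gamma> u v ^^ T) 0"
    unfolding gd_iter_def phi_def[abs_def] by simp
  have it: "norm ((phi \<gamma> u v ^^ n) 0 - \<omega>) \<le> q^n * norm \<omega>" for n
  proof (induction n)
    case 0 then show ?case by simp
  next
    case (Suc n)
    have "norm ((phi \<gamma> u v ^^ Suc n) 0 - \<omega>) = norm (phi \<gamma> u v ((phi \<gamma> u v ^^ n) 0) - phi \<gamma> u v \<omega>)"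
      using fx by simp
    also have "\<dots> \<le> q * norm ((phi \<gamma> u v ^^ n) 0 - \<omega>)" using contr by (simp add: dist_norm)
    also have "\<dots> \<le> q * (q^n * norm \<omega>)" using Suc q0 by (intro mult_left_mono) auto
    finally show ?case by simp
  qed
  have "q^T * norm \<omega> \<le> q^T * (norm u + norm v / 2)" using bd q0 by (intro mult_left_mono) auto
  then show ?thesis using it[of T] unfolding gi am q_def by linarith
qed



lemma eig_norms:
  assumes "is_econ_eig M U sig"
  shows "(norm (eig_u U sig))^2 = M$1$1" "(norm (eig_v U sig))^2 = M$2$2"
proof -
  have s0: "\<forall>i. sig $ i > 0" and M: "M = U ** diag_mat sig ** transpose U"
    using assms by (auto simp: is_econ_eig_def)
  have Mjj: "M$j$j = (\<Sum>k\<in>UNIV. sig$k * (U$j$k)^2)" for j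
  proof -
    have "M$j$j = (\<Sum>k\<in>UNIV. (\<Sum>i\<in>UNIV. U$j$i * diag_mat sig $i$k) * U$j$k)"
      unfolding M by (simp add: matrix_matrix_mult_def transpose_def)
    also have "\<dots> = (\<Sum>k\<in>UNIV. sig$k * (U$j$k)^2)"
      by (simp add: diag_mat_def power2_eq_square mult_ac if_distrib cong: if_cong)
    finally show ?thesis .
  qed
  have sq: "(sqrt (sig$k) * a)^2 = sig$k * a^2" for k a
    using s0 by (simp add: power_mult_distrib less_imp_le)
  show "(norm (eig_u U sig))^2 = M$1$1"
    unfolding Mjj by (simp add: eig_u_def power2_norm_eq_inner inner_vec_def sq power2_eq_square[symmetric])
  show "(norm (eig_v U sig))^2 = M$2$2"
    unfolding Mjj by (simp add: eig_v_def power2_norm_eq_inner inner_vec_def sq power2_eq_square[symmetric])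
qed

lemma W_entries:
  fixes c1 c2 :: "real^'n" and W :: "real^2^'n"
  assumes "W = (\<chi> i. vector [c1 $ i, c2 $ i])"
  shows "(transpose W ** W)$1$1 = (norm c1)^2" "(transpose W ** W)$2$2 = (norm c2)^2"
  using assms by (simp_all add: matrix_matrix_mult_def transpose_def power2_norm_eq_inner inner_vec_def)

lemma final_arith:
  fixes q K \<epsilon> \<gamma> :: real and T :: nat
  assumes q0: "0 \<le> q" and qg: "q \<le> 1 - \<gamma>" and g0: "\<gamma> > 0" and e0: "\<epsilon> > 0" and K0: "K \<ge> 0"
    and T: "real T \<ge> (1 / \<gamma>) * ln (K / \<epsilon>)"
  shows "q^T * K \<le> \<epsilon>"
proof (cases "K \<le> \<epsilon>")
  case True
  have "q \<le> 1" using qg g0 by simp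
  then have "q^T \<le> 1" using q0 by (simp add: power_le_one)
  then have "q^T * K \<le> 1 * K" using K0 by (intro mult_right_mono) auto
  then show ?thesis using True by simp
next
  case False
  then have Kp: "K > 0" "K / \<epsilon> > 0" using e0 by auto
  have "q \<le> exp (- \<gamma>)" using qg exp_ge_add_one_self[of "-\<gamma>"] by linarith
  then have "q^T \<le> exp (- \<gamma>)^T" using q0 by (intro power_mono) auto
  also have "\<dots> = exp (- (\<gamma> * real T))" by (simp add: exp_of_nat_mult[symmetric] mult.commute)
  also have "\<dots> \<le> exp (- ln (K / \<epsilon>))"
  proof -
    have "ln (K / \<epsilon>) \<le> \<gamma> * real T" using T g0 by (simp add: field_simps)
    then show ?thesis by simp
  qed
  also have "\<dots> = \<epsilon> / K" using Kp e0 by (simp add: exp_minus)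
  finally have "q^T * K \<le> \<epsilon> / K * K" using Kp by (intro mult_right_mono) auto
  then show ?thesis using Kp by simp
qed

theorem lemma2:
  fixes x :: "nat \<Rightarrow> real^'n::{finite,wellorder}" and y :: "nat \<Rightarrow> real"
    and th :: "nat \<Rightarrow> real^('n::{finite,wellorder})"
    and lam R B \<epsilon> \<gamma> :: real and t T :: nat
    and U :: "real^'p::finite^2" and sig :: "real^('p::finite)"
  assumes "lam > 0" "R > 0" "B > 0"
    and "\<forall>s\<ge>1. norm (x s) \<le> R \<and> y s \<in> {-1, 1}"
    and "is_aioli_forecasts lam B R x y th"
    and "t \<ge> 1"
    and "is_econ_eig (transpose (aioli_W lam B R x y th t) ** aioli_W lam B R x y th t) U sig"
    and "\<epsilon> > 0"
    and "\<gamma> = lam / (4 * lam + R^2)"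
    and "real T \<ge> (4 + R^2 / lam) * ln (R * real t / (\<epsilon> * sqrt lam))"
  shows "norm (gd_iter (Omega (eig_u U sig) (eig_v U sig)) \<gamma> T
               - argmin (Omega (eig_u U sig) (eig_v U sig))) \<le> \<epsilon>"
proof -
  note lam = assms(1) and R = assms(2) and B = assms(3) and xy = assms(4) and t = assms(6)
    and eig = assms(7) and e0 = assms(8) and gam = assms(9) and T = assms(10)
  define A where "A = aioli_A lam B R x y th t"
  define b where "b = aioli_b B R x y th t"
  define L where "L = cholesky A"
  define c1 where "c1 = matrix_inv L *v b"
  define c2 where "c2 = matrix_inv L *v x t"
  define u where "u = eig_u U sig"
  define v where "v = eig_v U sig"
  have W: "aioli_W lam B R x y th t = (\<chi> i. vector [c1 $ i, c2 $ i])"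
    by (simp add: aioli_W_def Let_def c1_def c2_def L_def A_def b_def)
  have nu: "(norm u)^2 = (norm c1)^2" using eig_norms(1)[OF eig] W_entries(1)[OF W] by (simp add: u_def)
  have nv: "(norm v)^2 = (norm c2)^2" using eig_norms(2)[OF eig] W_entries(2)[OF W] by (simp add: v_def)
  have Aq: "\<forall>z. z \<bullet> (A *v z) \<ge> lam * (norm z)^2" unfolding A_def using A_quad[OF B R] by blast
  have Apd: "\<forall>z. z \<noteq> 0 \<longrightarrow> z \<bullet> (A *v z) > 0"
  proof (intro allI impI)
    fix z :: "real^('n::{finite,wellorder})" assume "z \<noteq> 0"
    then have "lam * (norm z)^2 > 0" using lam by simp
    then show "z \<bullet> (A *v z) > 0" using Aq by (meson less_le_trans)
  qed
  have As: "\<forall>i j. A$i$j = A$j$i" unfolding A_def using A_sym by blast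
  have LA: "L ** transpose L = A"
    using cholesky_props[OF As Apd] unfolding L_def by blast
  have c1b: "(norm c1)^2 \<le> (norm b)^2 / lam" unfolding c1_def by (rule chol_inv_bound[OF LA Aq lam])
  have c2b: "(norm c2)^2 \<le> (norm (x t))^2 / lam" unfolding c2_def by (rule chol_inv_bound[OF LA Aq lam])
  have bb: "norm b \<le> (real t - 1) * R" unfolding b_def by (rule b_bound[OF B R xy t])
  have xt: "norm (x t) \<le> R" using xy t by auto
  have sl: "sqrt lam > 0" using lam by simp
  have nv2: "(norm v)^2 \<le> R^2 / lam"
  proof -
    have "(norm (x t))^2 \<le> R^2" using xt by (simp add: power_mono)
    then have "(norm (x t))^2 / lam \<le> R^2 / lam" using lam by (simp add: divide_right_mono)
    then show ?thesis using nv c2b by linarith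
  qed
  have nu2: "(norm u)^2 \<le> ((real t - 1) * R)^2 / lam"
  proof -
    have "(norm b)^2 \<le> ((real t - 1) * R)^2" using bb by (simp add: power_mono)
    then have "(norm b)^2 / lam \<le> ((real t - 1) * R)^2 / lam" using lam by (simp add: divide_right_mono)
    then show ?thesis using nu c1b by linarith
  qed
  have sq: "(a / sqrt lam)^2 = a^2 / lam" for a using lam by (simp add: power_divide)
  have nvb: "norm v \<le> R / sqrt lam"
  proof (rule power2_le_imp_le)
    show "(norm v)^2 \<le> (R / sqrt lam)^2" unfolding sq by (rule nv2)
    show "0 \<le> R / sqrt lam" using R sl by simp
  qed
  have nub: "norm u \<le> (real t - 1) * R / sqrt lam"
  proof (rule power2_le_imp_le)
    show "(norm u)^2 \<le> ((real t - 1) * R / sqrt lam)^2" unfolding sq by (rule nu2)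
    have "real t - 1 \<ge> 0" using t by simp
    then show "0 \<le> (real t - 1) * R / sqrt lam" using R sl by simp
  qed
  define K where "K = R * real t / sqrt lam"
  have uvK: "norm u + norm v / 2 \<le> K"
  proof -
    have "norm u + norm v / 2 \<le> (real t - 1) * R / sqrt lam + (R / sqrt lam) / 2"
      using add_mono[OF nub divide_right_mono[OF nvb, of 2]] by simp
    also have "\<dots> = (real t - 1/2) * R / sqrt lam" using sl by (simp add: field_simps)
    also have "\<dots> \<le> real t * R / sqrt lam" using R sl by (intro divide_right_mono mult_right_mono) auto
    also have "\<dots> = K" by (simp add: K_def)
    finally show ?thesis .
  qed
  have den: "4 * lam + R^2 > 0" using lam by (simp add: add_pos_nonneg)
  have g0: "\<gamma> > 0" unfolding gam using lam den by (rule divide_pos_pos)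
  have gc: "c * \<gamma> \<le> 1" if "c * lam \<le> 4 * lam + R^2" for c
  proof -
    have "c * \<gamma> = (c * lam) / (4 * lam + R^2)" by (simp add: gam)
    then show ?thesis using that den by (simp add: pos_divide_le_eq)
  qed
  have g1: "2 * \<gamma> \<le> 1" using gc[of 2] lam by (simp add: add_increasing2)
  have ginv: "1 / \<gamma> = 4 + R^2 / lam"
  proof -
    have "1 / \<gamma> = (4 * lam + R^2) / lam" by (simp add: gam)
    also have "\<dots> = 4 + R^2 / lam" using lam by (simp add: add_divide_distrib)
    finally show ?thesis .
  qed
  have gv: "\<gamma> * (norm v)^2 / 2 \<le> 2 * (1 - 2 * \<gamma>)"
  proof -
    have "\<gamma> * (norm v)^2 \<le> \<gamma> * (R^2 / lam)" using nv2 g0 by (intro mult_left_mono) auto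
    also have "\<dots> = R^2 / (4 * lam + R^2)" unfolding gam using lam den by (simp add: field_simps)
    also have "\<dots> \<le> 1" using den lam by (simp add: divide_le_eq_1)
    finally have a: "\<gamma> * (norm v)^2 / 2 \<le> 1/2" by simp
    have "4 * \<gamma> \<le> 1" using gc[of 4] by simp
    then have h: "1/2 \<le> 2 * (1 - 2 * \<gamma>)" by (simp add: algebra_simps)
    show ?thesis using a h by (rule order_trans)
  qed
  have main: "norm (gd_iter (Omega u v) \<gamma> T - argmin (Omega u v)) \<le> (1 - 2 * \<gamma>)^T * (norm u + norm v / 2)"
    by (rule gd_main[OF g0 g1 gv])
  have q0: "0 \<le> 1 - 2 * \<gamma>" using g1 by simp
  have "(1 - 2 * \<gamma>)^T * (norm u + norm v / 2) \<le> (1 - 2 * \<gamma>)^T * K"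
    using uvK q0 by (intro mult_left_mono) auto
  also have "\<dots> \<le> \<epsilon>"
  proof (rule final_arith[OF q0 _ g0 e0])
    show "1 - 2 * \<gamma> \<le> 1 - \<gamma>" using g0 by simp
    show "0 \<le> K" using R sl by (simp add: K_def)
    have "K / \<epsilon> = R * real t / (\<epsilon> * sqrt lam)" by (simp add: K_def field_simps)
    then show "(1 / \<gamma>) * ln (K / \<epsilon>) \<le> real T" using T ginv by simp
  qed
  finally show ?thesis using main unfolding u_def v_def by linarith
qed

end
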